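(* Let $Q$ be a latin quandle and $u\in Q$. If the subquandle $\mathrm{Sg}(u,x,y)$ is simply connected for every $x,y\in Q$, then $Q$ is simply connected.
   Context: A quandle is a set $Q$ with a binary operation $*$ such that every left translation $L_x:y\mapsto x*y$ is bijective, $x*(y*z)=(x*y)*(x*z)$ and $x*x=x$; left division is $x\backslash y=L_x^{-1}(y)$. $Q$ is latin if every right translation $y\mapsto y*x$ is bijective, and connected if $\langle L_x:x\in Q\rangle$ is transitive. $\mathrm{Sg}(u,x,y)$ is the smallest subset of $Q$ containing $u,x,y$ and closed under $*$ and $\backslash$. For a set $S$, a quandle cocycle with values in $\mathrm{Sym}_S$ is $\theta:Q\times Q\to\mathrm{Sym}_S$ with $\theta_{x*y,x*z}\theta_{x,z}=\theta_{x,y*z}\theta_{y,z}$ and $\theta_{x,x}=1$; it is cohomologous to the trivial cocycle if there is $\gamma:Q\to\mathrm{Sym}_S$ with $\theta_{x,y}=\gamma_{x*y}\gamma_y^{-1}$ for all $x,y$. A quandle is simply connected if it is connected and, for every set $S$, every such cocycle is cohomologous to the trivial cocycle. *)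

theory Defs
  imports Main
begin

definition quandle :: "'a set \<Rightarrow> ('a \<Rightarrow> 'a \<Rightarrow> 'a) \<Rightarrow> bool" where
  "quandle Q op \<longleftrightarrow>
     (\<forall>x\<in>Q. \<forall>y\<in>Q. op x y \<in> Q) \<and>
     (\<forall>x\<in>Q. bij_betw (op x) Q Q) \<and>
     (\<forall>x\<in>Q. \<forall>y\<in>Q. \<forall>z\<in>Q. op x (op y z) = op (op x y) (op x z)) \<and>
     (\<forall>x\<in>Q. op x x = x)"

definition ldiv :: "'a set \<Rightarrow> ('a \<Rightarrow> 'a \<Rightarrow> 'a) \<Rightarrow> 'a \<Rightarrow> 'a \<Rightarrow> 'a" where
  "ldiv Q op x y = the_inv_into Q (op x) y"

definition latin :: "'a set \<Rightarrow> ('a \<Rightarrow> 'a \<Rightarrow> 'a) \<Rightarrow> bool" where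
  "latin Q op \<longleftrightarrow> quandle Q op \<and> (\<forall>x\<in>Q. bij_betw (\<lambda>y. op y x) Q Q)"

text \<open>The group generated by the left translations L_x (x in Q), acting on Q;
  elements are represented as maps (only their values on Q matter).\<close>
inductive_set LMlt :: "'a set \<Rightarrow> ('a \<Rightarrow> 'a \<Rightarrow> 'a) \<Rightarrow> ('a \<Rightarrow> 'a) set"
  for Q :: "'a set" and op :: "'a \<Rightarrow> 'a \<Rightarrow> 'a" where
  LMlt_id: "id \<in> LMlt Q op"
| LMlt_L: "g \<in> LMlt Q op \<Longrightarrow> x \<in> Q \<Longrightarrow> op x \<circ> g \<in> LMlt Q op"
| LMlt_Linv: "g \<in> LMlt Q op \<Longrightarrow> x \<in> Q \<Longrightarrow> ldiv Q op x \<circ> g \<in> LMlt Q op"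

definition connected_quandle :: "'a set \<Rightarrow> ('a \<Rightarrow> 'a \<Rightarrow> 'a) \<Rightarrow> bool" where
  "connected_quandle Q op \<longleftrightarrow> quandle Q op \<and>
     (\<forall>a\<in>Q. \<forall>b\<in>Q. \<exists>g\<in>LMlt Q op. g a = b)"

inductive_set Sg :: "'a set \<Rightarrow> ('a \<Rightarrow> 'a \<Rightarrow> 'a) \<Rightarrow> 'a set \<Rightarrow> 'a set"
  for Q :: "'a set" and op :: "'a \<Rightarrow> 'a \<Rightarrow> 'a" and A :: "'a set" where
  Sg_gen: "a \<in> A \<Longrightarrow> a \<in> Sg Q op A"
| Sg_op: "a \<in> Sg Q op A \<Longrightarrow> b \<in> Sg Q op A \<Longrightarrow> op a b \<in> Sg Q op A"
| Sg_ldiv: "a \<in> Sg Q op A \<Longrightarrow> b \<in> Sg Q op A \<Longrightarrow> ldiv Q op a b \<in> Sg Q op A"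

text \<open>Quandle cocycles with values in Sym_S: theta x y is a permutation of S
  (represented as a map, only its values on S matter).\<close>
definition quandle_cocycle ::
  "'a set \<Rightarrow> ('a \<Rightarrow> 'a \<Rightarrow> 'a) \<Rightarrow> 's set \<Rightarrow> ('a \<Rightarrow> 'a \<Rightarrow> 's \<Rightarrow> 's) \<Rightarrow> bool" where
  "quandle_cocycle Q op S \<theta> \<longleftrightarrow>
     (\<forall>x\<in>Q. \<forall>y\<in>Q. bij_betw (\<theta> x y) S S) \<and>
     (\<forall>x\<in>Q. \<forall>y\<in>Q. \<forall>z\<in>Q. \<forall>s\<in>S.
        \<theta> (op x y) (op x z) (\<theta> x z s) = \<theta> x (op y z) (\<theta> y z s)) \<and>
     (\<forall>x\<in>Q. \<forall>s\<in>S. \<theta> x x s = s)"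

definition cohomologous_trivial ::
  "'a set \<Rightarrow> ('a \<Rightarrow> 'a \<Rightarrow> 'a) \<Rightarrow> 's set \<Rightarrow> ('a \<Rightarrow> 'a \<Rightarrow> 's \<Rightarrow> 's) \<Rightarrow> bool" where
  "cohomologous_trivial Q op S \<theta> \<longleftrightarrow>
     (\<exists>\<gamma> :: 'a \<Rightarrow> 's \<Rightarrow> 's. (\<forall>x\<in>Q. bij_betw (\<gamma> x) S S) \<and>
        (\<forall>x\<in>Q. \<forall>y\<in>Q. \<forall>s\<in>S. \<theta> x y s = \<gamma> (op x y) (inv_into S (\<gamma> y) s)))"

text \<open>Simple connectedness, relative to sets S of a fixed (arbitrary) type 's.\<close>
definition simply_connected :: "'s itself \<Rightarrow> 'a set \<Rightarrow> ('a \<Rightarrow> 'a \<Rightarrow> 'a) \<Rightarrow> bool" where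
  "simply_connected (_ :: 's itself) Q op \<longleftrightarrow> connected_quandle Q op \<and>
     (\<forall>(S :: 's set) \<theta>. quandle_cocycle Q op S \<theta> \<longrightarrow> cohomologous_trivial Q op S \<theta>)"

end

theory Submission
  imports Defs
begin

lemma triv_uniq:
  assumes conn: "connected_quandle P op" and u: "u \<in> P"
    and b1: "\<forall>x\<in>P. bij_betw (\<gamma> x) S S"
    and e1: "\<forall>x\<in>P. \<forall>y\<in>P. \<forall>s\<in>S. \<theta> x y s = \<gamma> (op x y) (inv_into S (\<gamma> y) s)"
    and b2: "\<forall>x\<in>P. bij_betw (\<gamma>' x) S S"
    and e2: "\<forall>x\<in>P. \<forall>y\<in>P. \<forall>s\<in>S. \<theta> x y s = \<gamma>' (op x y) (inv_into S (\<gamma>' y) s)"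
    and z: "z \<in> P" and s: "s \<in> S"
  shows "\<gamma> z (inv_into S (\<gamma> u) s) = \<gamma>' z (inv_into S (\<gamma>' u) s)"
proof -
  have q: "quandle P op" using conn by (simp add: connected_quandle_def)
  hence cl: "\<And>a b. a \<in> P \<Longrightarrow> b \<in> P \<Longrightarrow> op a b \<in> P"
    and bj: "\<And>a. a \<in> P \<Longrightarrow> bij_betw (op a) P P"
    by (auto simp: quandle_def)
  define \<eta> where "\<eta> b w = inv_into S (\<gamma>' b) (\<gamma> b w)" for b w
  have bk: "\<And>b w. b \<in> P \<Longrightarrow> w \<in> S \<Longrightarrow> \<gamma>' b (\<eta> b w) = \<gamma> b w"
    and etaS: "\<And>b w. b \<in> P \<Longrightarrow> w \<in> S \<Longrightarrow> \<eta> b w \<in> S"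
  proof -
    fix b w assume "b \<in> P" "w \<in> S"
    hence "\<gamma> b w \<in> \<gamma>' b ` S" using b1 b2 by (metis bij_betwE bij_betw_imp_surj_on)
    thus "\<gamma>' b (\<eta> b w) = \<gamma> b w" "\<eta> b w \<in> S"
      by (auto simp: \<eta>_def f_inv_into_f inv_into_into)
  qed
  have key: "\<And>a b w. a \<in> P \<Longrightarrow> b \<in> P \<Longrightarrow> w \<in> S \<Longrightarrow> \<eta> (op a b) w = \<eta> b w"
  proof -
    fix a b w assume a: "a \<in> P" and b: "b \<in> P" and w: "w \<in> S"
    have gs: "\<gamma> b w \<in> S" using b1 b w by (meson bij_betwE)
    have "inv_into S (\<gamma> b) (\<gamma> b w) = w"
      using b1 b w by (meson bij_betw_imp_inj_on inv_into_f_f)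
    hence "\<theta> a b (\<gamma> b w) = \<gamma> (op a b) w" using e1 a b gs by simp
    moreover have "\<theta> a b (\<gamma> b w) = \<gamma>' (op a b) (\<eta> b w)" using e2 a b gs by (simp add: \<eta>_def)
    ultimately have "\<gamma> (op a b) w = \<gamma>' (op a b) (\<eta> b w)" by simp
    hence "\<eta> (op a b) w = inv_into S (\<gamma>' (op a b)) (\<gamma>' (op a b) (\<eta> b w))"
      by (simp add: \<eta>_def)
    also have "\<dots> = \<eta> b w"
      using b2 cl[OF a b] etaS[OF b w] by (meson bij_betw_imp_inj_on inv_into_f_f)
    finally show "\<eta> (op a b) w = \<eta> b w" .
  qed
  have inv: "\<And>g. g \<in> LMlt P op \<Longrightarrow> \<forall>b\<in>P. g b \<in> P \<and> (\<forall>w\<in>S. \<eta> (g b) w = \<eta> b w)"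
  proof -
    fix g assume "g \<in> LMlt P op"
    thus "\<forall>b\<in>P. g b \<in> P \<and> (\<forall>w\<in>S. \<eta> (g b) w = \<eta> b w)"
    proof induction
      case LMlt_id
      then show ?case by simp
    next
      case (LMlt_L g x)
      then show ?case using cl key by auto
    next
      case (LMlt_Linv g x)
      show ?case
      proof
        fix b assume b: "b \<in> P"
        have gb: "g b \<in> P" using LMlt_Linv b by auto
        let ?c = "ldiv P op x (g b)"
        have ij: "inj_on (op x) P" and im: "op x ` P = P"
          using bj[OF \<open>x \<in> P\<close>] by (auto simp: bij_betw_def)
        have c: "?c \<in> P" using gb ij im unfolding ldiv_def
          by (metis the_inv_into_into subset_refl)
        have oc: "op x ?c = g b" using gb ij im unfolding ldiv_def
          by (metis f_the_inv_into_f)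
        have "\<forall>w\<in>S. \<eta> ?c w = \<eta> b w"
        proof
          fix w assume w: "w \<in> S"
          have "\<eta> ?c w = \<eta> (op x ?c) w" using key[OF \<open>x \<in> P\<close> c w] by simp
          also have "\<dots> = \<eta> b w" using oc LMlt_Linv b w by auto
          finally show "\<eta> ?c w = \<eta> b w" .
        qed
        thus "(ldiv P op x \<circ> g) b \<in> P \<and> (\<forall>w\<in>S. \<eta> ((ldiv P op x \<circ> g) b) w = \<eta> b w)"
          using c by simp
      qed
    qed
  qed
  obtain g where g: "g \<in> LMlt P op" "g u = z"
    using conn u z by (auto simp: connected_quandle_def)
  have etaz: "\<And>w. w \<in> S \<Longrightarrow> \<eta> z w = \<eta> u w" using inv[OF g(1)] u g(2) by auto
  define w where "w = inv_into S (\<gamma> u) s"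
  have sw: "s \<in> \<gamma> u ` S" using b1 u s by (metis bij_betw_imp_surj_on)
  have w: "w \<in> S" using sw by (simp add: w_def inv_into_into)
  have gw: "\<gamma> u w = s" using sw by (simp add: w_def f_inv_into_f)
  have "\<gamma> z w = \<gamma>' z (\<eta> z w)" using bk[OF z w] by simp
  also have "\<dots> = \<gamma>' z (\<eta> u w)" using etaz[OF w] by simp
  also have "\<dots> = \<gamma>' z (inv_into S (\<gamma>' u) s)" using gw by (simp add: \<eta>_def)
  finally show ?thesis by (simp add: w_def)
qed

lemma Sg_sub:
  assumes "quandle Q op" "A \<subseteq> Q"
  shows "Sg Q op A \<subseteq> Q"
proof
  fix x assume "x \<in> Sg Q op A"
  thus "x \<in> Q"
  proof induction
    case (Sg_gen a) then show ?case using assms by auto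
  next
    case (Sg_op a b) then show ?case using assms by (auto simp: quandle_def)
  next
    case (Sg_ldiv a b)
    have "bij_betw (op a) Q Q" using assms Sg_ldiv by (auto simp: quandle_def)
    then show ?case using Sg_ldiv unfolding ldiv_def
      by (metis bij_betw_def the_inv_into_into subset_refl)
  qed
qed

lemma Sg_mono:
  assumes "A \<subseteq> Sg Q op B"
  shows "Sg Q op A \<subseteq> Sg Q op B"
proof
  fix x assume "x \<in> Sg Q op A"
  thus "x \<in> Sg Q op B"
    by induction (use assms in \<open>auto intro: Sg.intros\<close>)
qed

theorem proposition3p6:
  fixes Q :: "'a set" and op :: "'a \<Rightarrow> 'a \<Rightarrow> 'a" and u :: 'a
  assumes "latin Q op"
    and "u \<in> Q"
    and "\<forall>x\<in>Q. \<forall>y\<in>Q. simply_connected TYPE('s) (Sg Q op {u, x, y}) op"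
  shows "simply_connected TYPE('s) Q op"
proof -
  have q: "quandle Q op" using assms(1) by (simp add: latin_def)
  have conn: "connected_quandle Q op"
    unfolding connected_quandle_def
  proof (intro conjI q ballI)
    fix a b assume a: "a \<in> Q" and b: "b \<in> Q"
    have "bij_betw (\<lambda>y. op y a) Q Q" using assms(1) a by (simp add: latin_def)
    then obtain c where c: "c \<in> Q" "op c a = b" using b by (metis bij_betw_imp_surj_on imageE)
    have "op c \<circ> id \<in> LMlt Q op" by (rule LMlt_L[OF LMlt_id c(1)])
    thus "\<exists>g\<in>LMlt Q op. g a = b" using c(2) by force
  qed
  have sub: "\<And>x y. x \<in> Q \<Longrightarrow> y \<in> Q \<Longrightarrow> Sg Q op {u, x, y} \<subseteq> Q"
    using Sg_sub[OF q] assms(2) by auto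
  have restr: "\<And>P S (\<theta> :: 'a \<Rightarrow> 'a \<Rightarrow> 's \<Rightarrow> 's). P \<subseteq> Q \<Longrightarrow> quandle_cocycle Q op S \<theta> \<Longrightarrow> quandle_cocycle P op S \<theta>"
    unfolding quandle_cocycle_def by (meson subsetD)
  have triv: "\<exists>\<gamma> :: 'a \<Rightarrow> 's \<Rightarrow> 's. (\<forall>x\<in>Sg Q op {u, x, y}. bij_betw (\<gamma> x) S S) \<and>
        (\<forall>a\<in>Sg Q op {u, x, y}. \<forall>b\<in>Sg Q op {u, x, y}. \<forall>s\<in>S. \<theta> a b s = \<gamma> (op a b) (inv_into S (\<gamma> b) s))"
    if "x \<in> Q" "y \<in> Q" "quandle_cocycle Q op S \<theta>" for x y S \<theta>
  proof -
    have "quandle_cocycle (Sg Q op {u, x, y}) op S \<theta>" using restr sub that by blast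
    thus ?thesis using assms(3) that unfolding simply_connected_def cohomologous_trivial_def by blast
  qed
  have sconn: "\<And>x y. x \<in> Q \<Longrightarrow> y \<in> Q \<Longrightarrow> connected_quandle (Sg Q op {u, x, y}) op"
    using assms(3) by (simp add: simply_connected_def)
  show ?thesis unfolding simply_connected_def
  proof (intro conjI conn allI impI)
    fix S :: "'s set" and \<theta> assume coc: "quandle_cocycle Q op S \<theta>"
    define G where "G z = (SOME \<gamma> :: 'a \<Rightarrow> 's \<Rightarrow> 's. (\<forall>x\<in>Sg Q op {u, z, z}. bij_betw (\<gamma> x) S S) \<and>
        (\<forall>a\<in>Sg Q op {u, z, z}. \<forall>b\<in>Sg Q op {u, z, z}. \<forall>s\<in>S. \<theta> a b s = \<gamma> (op a b) (inv_into S (\<gamma> b) s)))" for z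
    have G: "(\<forall>x\<in>Sg Q op {u, z, z}. bij_betw (G z x) S S) \<and>
        (\<forall>a\<in>Sg Q op {u, z, z}. \<forall>b\<in>Sg Q op {u, z, z}. \<forall>s\<in>S. \<theta> a b s = G z (op a b) (inv_into S (G z b) s))"
      if "z \<in> Q" for z
      unfolding G_def by (rule someI_ex[OF triv[OF that that coc]])
    define \<Gamma> where "\<Gamma> z s = G z z (inv_into S (G z u) s)" for z s
    have uS: "\<And>x y. u \<in> Sg Q op {u, x, y}" by (simp add: Sg.Sg_gen)
    have xS: "\<And>x y. x \<in> Sg Q op {u, x, y}" by (simp add: Sg.Sg_gen)
    have yS: "\<And>x y. y \<in> Sg Q op {u, x, y}" by (simp add: Sg.Sg_gen)
    have \<Gamma>bij: "bij_betw (\<Gamma> z) S S" if z: "z \<in> Q" for z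
    proof -
      have "bij_betw (G z u) S S" "bij_betw (G z z) S S" using G[OF z] by (auto intro: Sg.Sg_gen)
      hence "bij_betw (G z z \<circ> inv_into S (G z u)) S S"
        by (meson bij_betw_inv_into bij_betw_trans)
      moreover have "\<Gamma> z = G z z \<circ> inv_into S (G z u)" by (simp add: \<Gamma>_def fun_eq_iff)
      ultimately show ?thesis by simp
    qed
    show "cohomologous_trivial Q op S \<theta>"
      unfolding cohomologous_trivial_def
    proof (intro exI[of _ \<Gamma>] conjI ballI)
      fix x assume "x \<in> Q" thus "bij_betw (\<Gamma> x) S S" by (rule \<Gamma>bij)
    next
      fix x y s assume x: "x \<in> Q" and y: "y \<in> Q" and s: "s \<in> S"
      let ?P = "Sg Q op {u, x, y}"
      obtain \<gamma> where gb: "\<forall>x\<in>?P. bij_betw (\<gamma> x) S S"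
        and ge: "\<forall>a\<in>?P. \<forall>b\<in>?P. \<forall>s\<in>S. \<theta> a b s = \<gamma> (op a b) (inv_into S (\<gamma> b) s)"
        using triv[OF x y coc] by blast
      have xyP: "op x y \<in> ?P" by (simp add: Sg.Sg_gen Sg.Sg_op)
      have xyQ: "op x y \<in> Q" using q x y by (simp add: quandle_def)
      have N: "\<Gamma> z t = \<gamma> z (inv_into S (\<gamma> u) t)" if zP: "z \<in> ?P" and zQ: "z \<in> Q" and t: "t \<in> S" for z t
      proof -
        have PP: "Sg Q op {u, z, z} \<subseteq> ?P" using zP uS by (intro Sg_mono) auto
        have "G z z (inv_into S (G z u) t) = \<gamma> z (inv_into S (\<gamma> u) t)"
          apply (rule triv_uniq[OF sconn[OF zQ zQ] uS, where \<theta>=\<theta>])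
          using G[OF zQ] gb ge PP t by (auto simp: subset_iff intro: Sg.Sg_gen)
        thus ?thesis by (simp add: \<Gamma>_def)
      qed
      have yP: "y \<in> ?P" by (rule yS)
      have uP: "u \<in> ?P" by (rule uS)
      have bu: "bij_betw (\<gamma> u) S S" and by': "bij_betw (\<gamma> y) S S"
        using gb uP yP by auto
      define w where "w = \<gamma> u (inv_into S (\<gamma> y) s)"
      have iy: "inv_into S (\<gamma> y) s \<in> S" using by' s
        by (metis bij_betw_imp_surj_on inv_into_into)
      have wS: "w \<in> S" using bu iy by (simp add: w_def bij_betwE)
      have iw: "inv_into S (\<gamma> u) w = inv_into S (\<gamma> y) s"
        using bu iy by (simp add: w_def bij_betw_imp_inj_on inv_into_f_f)
      have "\<Gamma> y w = s" using N[OF yP y wS] iw by' s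
        by (simp add: bij_betw_imp_surj_on f_inv_into_f)
      hence iG: "inv_into S (\<Gamma> y) s = w"
        using \<Gamma>bij[OF y] wS by (metis bij_betw_imp_inj_on inv_into_f_eq)
      show "\<theta> x y s = \<Gamma> (op x y) (inv_into S (\<Gamma> y) s)"
        using iG N[OF xyP xyQ wS] iw ge x y s xS yS by auto
    qed
  qed
qed

end
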